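(* Let $A\subset\mathbb{R}$, let $f:A\to\mathbb{R}$ be a function and let $a,L\in\mathbb{R}$. Then $T_5\lim_{x\to a}f(x)=L$ if and only if there exist functions $g,h:A\to\mathbb{R}$ and a real $\delta_0>0$ such that $f(x)=g(x)+h(x)$ for all $x\in A$, $\lim_{x\to a}g(x)=L$, and the set $\left\{x\in\left((a-\delta_0,a+\delta_0)\setminus\{a\}\right)\cap A:\ h(x)\neq0\right\}$ is countable.
   Context: $T_5\lim_{x\to a}f(x)=L$ means: for every real $\varepsilon>0$ there exists a real $\delta_\varepsilon>0$ such that the set $\left\{x\in\left((a-\delta_{\varepsilon},a+\delta_{\varepsilon})\setminus\{a\}\right)\cap A:\ |f(x)-L|\geq\varepsilon\right\}$ is countable (finite or countably infinite). The statement $\lim_{x\to a}g(x)=L$ denotes the classical limit: for every $\varepsilon>0$ there is $\delta>0$ such that $|g(x)-L|<\varepsilon$ for all $x\in A$ with $0<|x-a|<\delta$. *)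

theory Defs
  imports "HOL-Analysis.Analysis"
begin

definition T5_lim :: "real set \<Rightarrow> (real \<Rightarrow> real) \<Rightarrow> real \<Rightarrow> real \<Rightarrow> bool" where
  "T5_lim A f a L \<longleftrightarrow>
     (\<forall>\<epsilon>>0. \<exists>\<delta>>0. countable {x \<in> ({a - \<delta> <..< a + \<delta>} - {a}) \<inter> A. \<bar>f x - L\<bar> \<ge> \<epsilon>})"

end

theory Submission
  imports Defs
begin

theorem theorem3:
  fixes A :: "real set" and f :: "real \<Rightarrow> real" and a L :: real
  shows "T5_lim A f a L \<longleftrightarrow>
    (\<exists>g h :: real \<Rightarrow> real. \<exists>\<delta>\<^sub>0 > 0.
       (\<forall>x\<in>A. f x = g x + h x) \<and>
       (\<forall>\<epsilon>>0. \<exists>\<delta>>0. \<forall>x\<in>A. 0 < \<bar>x - a\<bar> \<and> \<bar>x - a\<bar> < \<delta> \<longrightarrow> \<bar>g x - L\<bar> < \<epsilon>) \<and>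
       countable {x \<in> ({a - \<delta>\<^sub>0 <..< a + \<delta>\<^sub>0} - {a}) \<inter> A. h x \<noteq> 0})"
proof
  assume T: "T5_lim A f a L"
  have "\<forall>n::nat. \<exists>\<delta>>0. countable {x \<in> ({a - \<delta> <..< a + \<delta>} - {a}) \<inter> A. \<bar>f x - L\<bar> \<ge> 1 / (real n + 1)}"
    using T unfolding T5_lim_def by (auto)
  then obtain d where d: "\<And>n. d n > 0"
    "\<And>n. countable {x \<in> ({a - d n <..< a + d n} - {a}) \<inter> A. \<bar>f x - L\<bar> \<ge> 1 / (real n + 1)}"
    by metis
  define S where "S n = {x \<in> ({a - d n <..< a + d n} - {a}) \<inter> A. \<bar>f x - L\<bar> \<ge> 1 / (real n + 1)}" for n
  define E where "E = (\<Union>n. S n)"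
  have cE: "countable E" unfolding E_def S_def using d(2) by auto
  define g where "g x = (if x \<in> E then L else f x)" for x
  define h where "h x = (if x \<in> E then f x - L else 0)" for x
  show "\<exists>g h :: real \<Rightarrow> real. \<exists>\<delta>\<^sub>0 > 0.
       (\<forall>x\<in>A. f x = g x + h x) \<and>
       (\<forall>\<epsilon>>0. \<exists>\<delta>>0. \<forall>x\<in>A. 0 < \<bar>x - a\<bar> \<and> \<bar>x - a\<bar> < \<delta> \<longrightarrow> \<bar>g x - L\<bar> < \<epsilon>) \<and>
       countable {x \<in> ({a - \<delta>\<^sub>0 <..< a + \<delta>\<^sub>0} - {a}) \<inter> A. h x \<noteq> 0}"
  proof (intro exI conjI)
    show "d 0 > 0" by (rule d(1))
    show "\<forall>x\<in>A. f x = g x + h x" by (auto simp: g_def h_def)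
    show "countable {x \<in> ({a - d 0 <..< a + d 0} - {a}) \<inter> A. h x \<noteq> 0}"
      by (rule countable_subset[OF _ cE]) (auto simp: h_def split: if_splits)
    show "\<forall>\<epsilon>>0. \<exists>\<delta>>0. \<forall>x\<in>A. 0 < \<bar>x - a\<bar> \<and> \<bar>x - a\<bar> < \<delta> \<longrightarrow> \<bar>g x - L\<bar> < \<epsilon>"
    proof (intro allI impI)
      fix e :: real assume e: "e > 0"
      obtain n :: nat where n: "1 / (real n + 1) < e"
        using e by (metis Suc_eq_plus1 nat_approx_posE of_nat_Suc add.commute)
      show "\<exists>\<delta>>0. \<forall>x\<in>A. 0 < \<bar>x - a\<bar> \<and> \<bar>x - a\<bar> < \<delta> \<longrightarrow> \<bar>g x - L\<bar> < e"
      proof (intro exI conjI ballI impI)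
        show "d n > 0" by (rule d(1))
        fix x assume x: "x \<in> A" "0 < \<bar>x - a\<bar> \<and> \<bar>x - a\<bar> < d n"
        show "\<bar>g x - L\<bar> < e"
        proof (cases "x \<in> E")
          case True then show ?thesis using e by (simp add: g_def)
        next
          case False
          then have "x \<notin> S n" unfolding E_def by auto
          moreover have "x \<in> ({a - d n <..< a + d n} - {a}) \<inter> A" using x by auto
          ultimately have "\<bar>f x - L\<bar> < 1 / (real n + 1)" unfolding S_def by auto
          then show ?thesis using n False by (simp add: g_def)
        qed
      qed
    qed
  qed
next
  assume "\<exists>g h :: real \<Rightarrow> real. \<exists>\<delta>\<^sub>0 > 0.
       (\<forall>x\<in>A. f x = g x + h x) \<and>
       (\<forall>\<epsilon>>0. \<exists>\<delta>>0. \<forall>x\<in>A. 0 < \<bar>x - a\<bar> \<and> \<bar>x - a\<bar> < \<delta> \<longrightarrow> \<bar>g x - L\<bar> < \<epsilon>) \<and>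
       countable {x \<in> ({a - \<delta>\<^sub>0 <..< a + \<delta>\<^sub>0} - {a}) \<inter> A. h x \<noteq> 0}"
  then obtain g h d0 where d0: "d0 > 0" and fgh: "\<forall>x\<in>A. f x = g x + h x"
    and lim: "\<forall>\<epsilon>>0. \<exists>\<delta>>0. \<forall>x\<in>A. 0 < \<bar>x - a\<bar> \<and> \<bar>x - a\<bar> < \<delta> \<longrightarrow> \<bar>g x - L\<bar> < \<epsilon>"
    and c: "countable {x \<in> ({a - d0 <..< a + d0} - {a}) \<inter> A. h x \<noteq> 0}"
    by blast
  show "T5_lim A f a L"
    unfolding T5_lim_def
  proof (intro allI impI)
    fix e :: real assume e: "e > 0"
    then obtain d where d: "d > 0" and dg: "\<forall>x\<in>A. 0 < \<bar>x - a\<bar> \<and> \<bar>x - a\<bar> < d \<longrightarrow> \<bar>g x - L\<bar> < e"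
      using lim by blast
    show "\<exists>\<delta>>0. countable {x \<in> ({a - \<delta> <..< a + \<delta>} - {a}) \<inter> A. \<bar>f x - L\<bar> \<ge> e}"
    proof (intro exI conjI)
      show "min d d0 > 0" using d d0 by simp
      show "countable {x \<in> ({a - min d d0 <..< a + min d d0} - {a}) \<inter> A. \<bar>f x - L\<bar> \<ge> e}"
      proof (rule countable_subset[OF _ c], safe)
        fix x assume x: "x \<in> A" "x \<in> {a - min d d0 <..< a + min d d0}" "x \<noteq> a" "e \<le> \<bar>f x - L\<bar>"
        show "x \<in> {a - d0 <..< a + d0}" using x by auto
        show "h x = 0 \<Longrightarrow> False"
        proof -
          assume "h x = 0"
          then have "f x = g x" using fgh x by auto
          moreover have "\<bar>g x - L\<bar> < e" using dg x by auto
          ultimately show False using x by auto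
        qed
      qed
    qed
  qed
qed

end
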